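(* Let $k\geq 2$ and let $G\subseteq V_{n-3}$ be a $(2k-2)$-set with property $P_{n-3}$. Then $F=G\cup\{n-2,n-1,n\}$ is a facet of $B^{2k,k-1}_n$.
   Context: $V_n=\{\pm1,\dots,\pm n\}$; $-X$ denotes the image of $X$ under $v\mapsto -v$. For pure complexes $\Gamma\subseteq\Delta$ of the same dimension, $\Delta\setminus\Gamma$ is the subcomplex generated by the facets of $\Delta$ not facets of $\Gamma$. $\overline{W}$ is the simplex on $W$, $*$ is the join, $\Delta*v=\Delta*\overline{\{v\}}$. The complexes $\Delta^d_n$ and $B^{d,i}_n$ are defined recursively: $\Delta^1_n$ is the cycle $(1,2,\dots,n,-1,\dots,-n,1)$; $\Delta^d_{d+1}$ is the boundary complex of the $(d+1)$-cross-polytope on $V_{d+1}$; $B^{d,j}_n=\emptyset$ for $j<0$; $B^{1,0}_n=\overline{\{-1,n\}}$; for $d=2k$, $n\geq 2k$: $B^{2k-1,k}_n=\Delta^{2k-1}_n\setminus B^{2k-1,k-1}_n$; for $n\geq d+1$, $i\leq\lfloor d/2\rfloor$: $B^{d,i}_n=(B^{d-1,i}_{n-1}*n)\cup((-B^{d-1,i-1}_{n-1})*(-n))$; $\Delta^d_{n+1}$ is obtained from $\Delta^d_n$ by replacing $B^{d,\lceil d/2\rceil-1}_n$ with $\partial B^{d,\lceil d/2\rceil-1}_n*(n+1)$ and $-B^{d,\lceil d/2\rceil-1}_n$ with $\partial(-B^{d,\lceil d/2\rceil-1}_n)*(-n-1)$. A $2j$-set $G=\{p_1,\dots,p_{2j}\}\subseteq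 V_N$ has property $P_N$ if $1\leq|p_1|<\dots<|p_{2j}|\leq N$, $p_{2i-1},p_{2i}$ have the same sign for all $i$, $|p_2|-|p_1|=1$, and $|p_{2i}|-|p_{2i-1}|=2$ for $2\leq i\leq j$. *)

theory Defs
  imports Main
begin

text \<open>Simplicial complexes on vertex set int, represented as sets of faces
  (finite vertex sets, downward closed). The empty set of faces is the void complex.\<close>

definition Vn :: "nat \<Rightarrow> int set" where
  "Vn n = {v. v \<noteq> 0 \<and> \<bar>v\<bar> \<le> int n}"

definition negc :: "int set set \<Rightarrow> int set set" where
  "negc K = (\<lambda>\<sigma>. uminus ` \<sigma>) ` K"

definition simplex :: "int set \<Rightarrow> int set set" where
  "simplex W = Pow W"

definition join :: "int set set \<Rightarrow> int set set \<Rightarrow> int set set" where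
  "join K L = {\<sigma> \<union> \<tau> | \<sigma> \<tau>. \<sigma> \<in> K \<and> \<tau> \<in> L}"

definition facets :: "int set set \<Rightarrow> int set set" where
  "facets K = {\<sigma> \<in> K. \<forall>\<tau>\<in>K. \<sigma> \<subseteq> \<tau> \<longrightarrow> \<tau> = \<sigma>}"

definition generated :: "int set set \<Rightarrow> int set set" where
  "generated F = {\<sigma>. \<exists>\<tau>\<in>F. \<sigma> \<subseteq> \<tau>}"

definition diffc :: "int set set \<Rightarrow> int set set \<Rightarrow> int set set" where
  "diffc D G = generated (facets D - facets G)"

text \<open>Boundary of a pure complex (ball): generated by the ridges lying in exactly one facet.\<close>
definition bd :: "int set set \<Rightarrow> int set set" where
  "bd K = generated {R. card {F \<in> facets K. R \<subseteq> F \<and> card F = card R + 1} = 1}"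

text \<open>The cycle (1,2,...,n,-1,...,-n,1).\<close>
definition cycle :: "nat \<Rightarrow> int set set" where
  "cycle n = generated
     ({{int i, int i + 1} | i. 1 \<le> i \<and> i < n} \<union> {{- int i, - int i - 1} | i. 1 \<le> i \<and> i < n}
      \<union> {{int n, -1}, {- int n, 1}})"

text \<open>Boundary complex of the m-cross-polytope on V_m.\<close>
definition crossbd :: "nat \<Rightarrow> int set set" where
  "crossbd m = {\<sigma>. \<sigma> \<subseteq> Vn m \<and> (\<forall>v\<in>\<sigma>. - v \<notin> \<sigma>)}"

definition replace :: "int set set \<Rightarrow> int set set \<Rightarrow> nat \<Rightarrow> int set set" where
  "replace D B m = diffc (diffc D B) (negc B)
      \<union> join (bd B) (simplex {int m + 1})
      \<union> join (bd (negc B)) (simplex {- (int m + 1)})"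

function Delta :: "nat \<Rightarrow> nat \<Rightarrow> int set set"
  and Bc :: "nat \<Rightarrow> int \<Rightarrow> nat \<Rightarrow> int set set" where
  "Delta d n =
     (if d = 0 \<or> n < d + 1 then {}
      else if d = 1 then cycle n
      else if n = d + 1 then crossbd (d + 1)
      else replace (Delta d (n - 1)) (Bc d (int ((d + 1) div 2) - 1) (n - 1)) (n - 1))"
| "Bc d i n =
     (if i < 0 \<or> d = 0 \<or> n < d + 1 then {}
      else if d = 1 \<and> i = 0 then simplex {-1, int n}
      else if odd d \<and> i = int ((d + 1) div 2) then diffc (Delta d n) (Bc d (i - 1) n)
      else if 2 \<le> d \<and> i \<le> int (d div 2) then
        join (Bc (d - 1) i (n - 1)) (simplex {int n})
        \<union> join (negc (Bc (d - 1) (i - 1) (n - 1))) (simplex {- int n})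
      else {})"
  by pat_completeness auto
termination
  by (relation "measures
     [\<lambda>x. case x of Inl (d, n) \<Rightarrow> d | Inr (d, i, n) \<Rightarrow> d,
      \<lambda>x. case x of Inl (d, n) \<Rightarrow> n | Inr (d, i, n) \<Rightarrow> n,
      \<lambda>x. case x of Inl (d, n) \<Rightarrow> 0
         | Inr (d, i, n) \<Rightarrow> (if odd d \<and> i = int ((d + 1) div 2) then 1 else 0)]") auto

definition propP :: "nat \<Rightarrow> int set \<Rightarrow> bool" where
  "propP N G \<longleftrightarrow> (\<exists>(j::nat) (p::nat \<Rightarrow> int).
      G = p ` {1..2*j} \<and>
      1 \<le> \<bar>p 1\<bar> \<and> (\<forall>i\<in>{1..<2*j}. \<bar>p i\<bar> < \<bar>p (Suc i)\<bar>) \<and> \<bar>p (2*j)\<bar> \<le> int N \<and>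
      (\<forall>i\<in>{1..j}. sgn (p (2*i - 1)) = sgn (p (2*i))) \<and>
      \<bar>p 2\<bar> - \<bar>p 1\<bar> = 1 \<and>
      (\<forall>i\<in>{2..j}. \<bar>p (2*i)\<bar> - \<bar>p (2*i - 1)\<bar> = 2))"

end

theory Submission
  imports Defs
begin

declare Delta.simps[simp del] Bc.simps[simp del]

definition ok :: "nat \<Rightarrow> nat \<Rightarrow> int set \<Rightarrow> bool" where
  "ok d n \<sigma> \<longleftrightarrow> finite \<sigma> \<and> card \<sigma> \<le> Suc d \<and> \<sigma> \<subseteq> Vn n"

lemma join_simplex: "join K (simplex {v}) = K \<union> insert v ` K"
proof (rule set_eqI)
  fix x
  show "x \<in> join K (simplex {v}) \<longleftrightarrow> x \<in> K \<union> insert v ` K"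
  proof
    assume "x \<in> join K (simplex {v})"
    then obtain \<sigma> \<tau> where st: "x = \<sigma> \<union> \<tau>" "\<sigma> \<in> K" "\<tau> \<subseteq> {v}"
      unfolding join_def simplex_def by blast
    then have "\<tau> = {} \<or> \<tau> = {v}" by (simp add: subset_singleton_iff)
    then show "x \<in> K \<union> insert v ` K" using st by auto
  next
    assume "x \<in> K \<union> insert v ` K"
    then have "\<exists>\<sigma> \<tau>. x = \<sigma> \<union> \<tau> \<and> \<sigma> \<in> K \<and> \<tau> \<in> Pow {v}"
    proof
      assume "x \<in> K" then show ?thesis by (intro exI[of _ x] exI[of _ "{}"]) simp
    next
      assume "x \<in> insert v ` K"
      then obtain \<sigma> where "\<sigma> \<in> K" "x = insert v \<sigma>" by blast
      then show ?thesis by (intro exI[of _ \<sigma>] exI[of _ "{v}"]) simp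
    qed
    then show "x \<in> join K (simplex {v})" unfolding join_def simplex_def by blast
  qed
qed

lemma negc_mem: "\<sigma> \<in> negc K \<longleftrightarrow> uminus ` \<sigma> \<in> K"
proof -
  have inv: "\<And>A::int set. uminus ` uminus ` A = A" by (simp add: image_image)
  show ?thesis
  proof
    assume "\<sigma> \<in> negc K"
    then obtain \<tau> where "\<tau> \<in> K" "\<sigma> = uminus ` \<tau>" unfolding negc_def by blast
    then show "uminus ` \<sigma> \<in> K" using inv by simp
  next
    assume a: "uminus ` \<sigma> \<in> K"
    have "\<sigma> = uminus ` (uminus ` \<sigma>)" using inv by simp
    then show "\<sigma> \<in> negc K" unfolding negc_def using a by blast
  qed
qed

lemma card_neg[simp]: "card (uminus ` (\<sigma>::int set)) = card \<sigma>"
  by (simp add: card_image)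

lemma Vn_neg: "uminus ` \<sigma> \<subseteq> Vn n \<longleftrightarrow> \<sigma> \<subseteq> Vn n"
  unfolding Vn_def by auto

lemma ok_neg: "ok d n (uminus ` \<sigma>) \<longleftrightarrow> ok d n \<sigma>"
  unfolding ok_def using Vn_neg by (auto simp: finite_image_iff)

lemma generated_mem: "\<sigma> \<in> generated S \<longleftrightarrow> (\<exists>\<tau>\<in>S. \<sigma> \<subseteq> \<tau>)"
  unfolding generated_def by auto

lemma facets_sub: "facets K \<subseteq> K" unfolding facets_def by auto

lemma Vn_mono: "m \<le> n \<Longrightarrow> Vn m \<subseteq> Vn n" unfolding Vn_def by auto

lemma ok_sub: "ok d n \<tau> \<Longrightarrow> \<sigma> \<subseteq> \<tau> \<Longrightarrow> ok d n \<sigma>"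
  unfolding ok_def by (meson card_mono dual_order.trans finite_subset)

lemma ok_mono: "ok d m \<sigma> \<Longrightarrow> m \<le> n \<Longrightarrow> ok d n \<sigma>"
  unfolding ok_def using Vn_mono by blast

lemma diffc_sub: "\<sigma> \<in> diffc D E \<Longrightarrow> \<exists>\<tau>\<in>D. \<sigma> \<subseteq> \<tau>"
  unfolding diffc_def generated_def facets_def by auto

lemma bd_sub: "\<sigma> \<in> bd K \<Longrightarrow> \<exists>R F. \<sigma> \<subseteq> R \<and> F \<in> facets K \<and> R \<subseteq> F \<and> card F = card R + 1"
proof -
  assume "\<sigma> \<in> bd K"
  then obtain R where R: "\<sigma> \<subseteq> R" "card {F \<in> facets K. R \<subseteq> F \<and> card F = card R + 1} = 1"
    unfolding bd_def generated_def by auto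
  then obtain F where "F \<in> {F \<in> facets K. R \<subseteq> F \<and> card F = card R + 1}"
    by (metis card.empty ex_in_conv zero_neq_one)
  then show ?thesis using R by blast
qed

lemma ok_bd: "(\<And>\<tau>. \<tau> \<in> K \<Longrightarrow> ok d m \<tau>) \<Longrightarrow> \<sigma> \<in> bd K \<Longrightarrow> finite \<sigma> \<and> card \<sigma> \<le> d \<and> \<sigma> \<subseteq> Vn m"
proof -
  assume h: "\<And>\<tau>. \<tau> \<in> K \<Longrightarrow> ok d m \<tau>" and s: "\<sigma> \<in> bd K"
  obtain R F where RF: "\<sigma> \<subseteq> R" "F \<in> facets K" "R \<subseteq> F" "card F = card R + 1"
    using bd_sub[OF s] by blast
  have "ok d m F" using h RF(2) facets_sub by blast
  hence fin: "finite F" "card F \<le> Suc d" "F \<subseteq> Vn m" unfolding ok_def by auto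
  have "finite R" using fin RF finite_subset by blast
  moreover have "card R \<le> d" using RF fin by simp
  ultimately show ?thesis using RF fin by (meson card_mono dual_order.trans finite_subset)
qed

lemma ok_join_bd: assumes "\<And>\<tau>. \<tau> \<in> K \<Longrightarrow> ok d m \<tau>" "\<sigma> \<in> join (bd K) (simplex {v})" "v \<in> Vn (Suc m)"
  shows "ok d (Suc m) \<sigma>"
proof -
  have "\<sigma> \<in> bd K \<or> (\<exists>\<tau>\<in>bd K. \<sigma> = insert v \<tau>)" using assms(2) by (auto simp: join_simplex)
  then obtain \<tau> where t: "\<tau> \<in> bd K" "\<sigma> = \<tau> \<or> \<sigma> = insert v \<tau>" by blast
  have "finite \<tau> \<and> card \<tau> \<le> d \<and> \<tau> \<subseteq> Vn m" using ok_bd[OF assms(1) t(1)] by auto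
  moreover have "Vn m \<subseteq> Vn (Suc m)" by (simp add: Vn_mono)
  ultimately show ?thesis using t(2) assms(3) unfolding ok_def
    by (auto simp: card_insert_if)
qed

lemma ok_replace: assumes "\<And>\<tau>. \<tau> \<in> D \<Longrightarrow> ok d m \<tau>" "\<And>\<tau>. \<tau> \<in> B \<Longrightarrow> ok d m \<tau>"
    "\<sigma> \<in> replace D B m"
  shows "ok d (Suc m) \<sigma>"
proof -
  have nb: "\<And>\<tau>. \<tau> \<in> negc B \<Longrightarrow> ok d m \<tau>" using assms(2) ok_neg negc_mem by metis
  have v1: "int m + 1 \<in> Vn (Suc m)" "- (int m + 1) \<in> Vn (Suc m)" unfolding Vn_def by auto
  consider "\<sigma> \<in> diffc (diffc D B) (negc B)" | "\<sigma> \<in> join (bd B) (simplex {int m + 1})"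
    | "\<sigma> \<in> join (bd (negc B)) (simplex {- (int m + 1)})" using assms(3) unfolding replace_def by blast
  then show ?thesis
  proof cases
    case 1
    then obtain \<tau> where "\<tau> \<in> diffc D B" "\<sigma> \<subseteq> \<tau>" using diffc_sub by blast
    then obtain \<rho> where "\<rho> \<in> D" "\<sigma> \<subseteq> \<rho>" using diffc_sub by blast
    then show ?thesis using assms(1) ok_sub ok_mono by (meson le_SucI order_refl)
  next
    case 2 then show ?thesis using ok_join_bd[OF assms(2) _ v1(1)] by blast
  next
    case 3 then show ?thesis using ok_join_bd[OF nb _ v1(2)] by blast
  qed
qed

lemma ok_cycle: "2 \<le> n \<Longrightarrow> \<sigma> \<in> cycle n \<Longrightarrow> ok 1 n \<sigma>"
proof -
  assume n: "2 \<le> n" and s: "\<sigma> \<in> cycle n"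
  then obtain \<tau> where t: "\<sigma> \<subseteq> \<tau>" "\<tau> \<in> {{int i, int i + 1} | i. 1 \<le> i \<and> i < n} \<union> {{- int i, - int i - 1} | i. 1 \<le> i \<and> i < n}
      \<union> {{int n, -1}, {- int n, 1}}" unfolding cycle_def generated_def by blast
  have "ok 1 n \<tau>" using t(2) n unfolding ok_def Vn_def by (auto simp: card_insert_if)
  then show ?thesis using t(1) ok_sub by blast
qed

lemma finite_Vn: "finite (Vn m)"
  unfolding Vn_def by (rule finite_subset[of _ "{-int m..int m}"]) auto

lemma ok_cross: "\<sigma> \<in> crossbd m \<Longrightarrow> m = Suc d \<Longrightarrow> ok d m \<sigma>"
proof -
  assume s: "\<sigma> \<in> crossbd m" and m: "m = Suc d"
  have sub: "\<sigma> \<subseteq> Vn m" and nv: "\<forall>v\<in>\<sigma>. - v \<notin> \<sigma>" using s unfolding crossbd_def by auto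
  have fin: "finite \<sigma>" using sub finite_Vn finite_subset by blast
  have inj: "inj_on abs \<sigma>"
  proof (rule inj_onI)
    fix x y assume "x \<in> \<sigma>" "y \<in> \<sigma>" "\<bar>x\<bar> = \<bar>y\<bar>"
    then show "x = y" using nv by (auto simp: abs_eq_iff)
  qed
  have "abs ` \<sigma> \<subseteq> {1..int m}" using sub unfolding Vn_def by auto
  hence "card (abs ` \<sigma>) \<le> m" by (metis card_atLeastAtMost_int card_mono finite_atLeastAtMost_int
      diff_add_cancel nat_int)
  then show ?thesis using card_image[OF inj] fin sub m unfolding ok_def by simp
qed

lemma ok_cross': "\<sigma> \<in> crossbd (Suc d) \<Longrightarrow> ok d (Suc d) \<sigma>"
  using ok_cross by blast

lemma ok_join: assumes "\<And>\<tau>. \<tau> \<in> K \<Longrightarrow> ok d m \<tau>" "\<sigma> \<in> join K (simplex {v})" "v \<in> Vn (Suc m)"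
  shows "ok (Suc d) (Suc m) \<sigma>"
proof -
  obtain \<tau> where t: "\<tau> \<in> K" "\<sigma> = \<tau> \<or> \<sigma> = insert v \<tau>" using assms(2) by (auto simp: join_simplex)
  have "ok d m \<tau>" using assms(1) t(1) by blast
  moreover have "Vn m \<subseteq> Vn (Suc m)" by (simp add: Vn_mono)
  ultimately show ?thesis using t(2) assms(3) unfolding ok_def
    by (auto simp: card_insert_if)
qed

lemma bounds: shows bD: "\<forall>\<sigma>\<in>Delta d n. ok d n \<sigma>" and bB: "\<forall>\<sigma>\<in>Bc d i n. ok d n \<sigma>"
proof (induction d n and d i n rule: Delta_Bc.induct)
  case (1 d n)
  show ?case
  proof (cases "d = 0 \<or> n < d + 1")
    case True then show ?thesis by (subst Delta.simps) simp
  next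
    case c1: False
    show ?thesis
    proof (cases "d = 1")
      case True then show ?thesis using c1 ok_cycle by (subst Delta.simps) simp
    next
      case c2: False
      show ?thesis
      proof (cases "n = d + 1")
        case True then show ?thesis using c1 c2 ok_cross' by (subst Delta.simps) simp
      next
        case c3: False
        have e: "Delta d n = replace (Delta d (n - 1)) (Bc d (int ((d + 1) div 2) - 1) (n - 1)) (n - 1)"
          using c1 c2 c3 by (subst Delta.simps) simp
        have n: "Suc (n - 1) = n" using c1 by simp
        show ?thesis unfolding e using ok_replace[of "Delta d (n - 1)" d "n - 1"] "1.IH" c1 c2 c3 n by metis
      qed
    qed
  qed
next
  case (2 d i n)
  show ?case
  proof (cases "i < 0 \<or> d = 0 \<or> n < d + 1")
    case True then show ?thesis by (subst Bc.simps) simp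
  next
    case c1: False
    show ?thesis
    proof (cases "d = 1 \<and> i = 0")
      case True
      then have "Bc d i n = simplex {-1, int n}" using c1 by (subst Bc.simps) simp
      moreover have "\<forall>\<sigma>\<in>simplex {-1, int n}. ok d n \<sigma>" using True c1
        unfolding simplex_def ok_def Vn_def
        by (auto simp: card_insert_if intro: card_mono[of "{-1, int n}", simplified, THEN le_trans] finite_subset[of _ "{-1, int n}"])
      ultimately show ?thesis by simp
    next
      case c2: False
      show ?thesis
      proof (cases "odd d \<and> i = int ((d + 1) div 2)")
        case True
        then have "Bc d i n = diffc (Delta d n) (Bc d (i - 1) n)" using c1 c2 by (subst Bc.simps) simp
        then show ?thesis using "2.IH"(1) c1 c2 True diffc_sub ok_sub by metis
      next
        case c3: False
        show ?thesis
        proof (cases "2 \<le> d \<and> i \<le> int (d div 2)")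
          case c4: True
          then have e: "Bc d i n = join (Bc (d - 1) i (n - 1)) (simplex {int n})
            \<union> join (negc (Bc (d - 1) (i - 1) (n - 1))) (simplex {- int n})"
            by (subst Bc.simps) (simp only: if_not_P[OF c1] if_not_P[OF c2] if_not_P[OF c3], simp add: c4)
          have ih1: "\<And>\<tau>. \<tau> \<in> Bc (d - 1) i (n - 1) \<Longrightarrow> ok (d - 1) (n - 1) \<tau>" using "2.IH"(3) c1 c2 c3 c4 by blast
          have ih2: "\<And>\<tau>. \<tau> \<in> negc (Bc (d - 1) (i - 1) (n - 1)) \<Longrightarrow> ok (d - 1) (n - 1) \<tau>"
            using "2.IH"(4) c1 c2 c3 c4 negc_mem ok_neg by metis
          have dd: "Suc (d - 1) = d" "Suc (n - 1) = n" using c4 c1 by auto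
          have v: "int n \<in> Vn (Suc (n - 1))" "- int n \<in> Vn (Suc (n - 1))" using dd c1 unfolding Vn_def by auto
          show ?thesis unfolding e using ok_join[OF ih1 _ v(1)] ok_join[OF ih2 _ v(2)] dd by auto
        next
          case False
          have "Bc d i n = {}"
            by (subst Bc.simps) (simp only: if_not_P[OF c1] if_not_P[OF c2] if_not_P[OF c3] if_not_P[OF False])
          then show ?thesis by simp
        qed
      qed
    qed
  qed
qed

lemma Bc_small: "n < d + 1 \<or> i < 0 \<Longrightarrow> Bc d i n = {}"
  by (subst Bc.simps) auto

lemma Bc_gen: "2 \<le> d \<Longrightarrow> 0 \<le> i \<Longrightarrow> i \<le> int (d div 2) \<Longrightarrow> \<not> (odd d \<and> i = int ((d + 1) div 2))
  \<Longrightarrow> d + 1 \<le> n \<Longrightarrow> Bc d i n = join (Bc (d - 1) i (n - 1)) (simplex {int n})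
        \<union> join (negc (Bc (d - 1) (i - 1) (n - 1))) (simplex {- int n})"
proof -
  assume a: "2 \<le> d" "0 \<le> i" "i \<le> int (d div 2)" "\<not> (odd d \<and> i = int ((d + 1) div 2))" "d + 1 \<le> n"
  have c1: "\<not> (i < 0 \<or> d = 0 \<or> n < d + 1)" using a by auto
  have c2: "\<not> (d = 1 \<and> i = 0)" using a by auto
  have c3: "2 \<le> d \<and> i \<le> int (d div 2)" using a by auto
  show ?thesis by (subst Bc.simps) (simp only: if_not_P[OF c1] if_not_P[OF c2] if_not_P[OF a(4)] if_P[OF c3])
qed

lemma Bc_odd: "odd d \<Longrightarrow> i = int ((d + 1) div 2) \<Longrightarrow> d + 1 \<le> n
  \<Longrightarrow> Bc d i n = diffc (Delta d n) (Bc d (i - 1) n)"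
  by (subst Bc.simps) auto

lemma Delta_rep: "2 \<le> d \<Longrightarrow> d + 1 < n \<Longrightarrow>
  Delta d n = replace (Delta d (n - 1)) (Bc d (int ((d + 1) div 2) - 1) (n - 1)) (n - 1)"
  by (subst Delta.simps) auto

lemma Delta_one: "2 \<le> n \<Longrightarrow> Delta 1 n = cycle n"
  by (subst Delta.simps) auto

lemma facet_card: "\<sigma> \<in> K \<Longrightarrow> (\<And>\<tau>. \<tau> \<in> K \<Longrightarrow> ok d m \<tau>) \<Longrightarrow> card \<sigma> = Suc d \<Longrightarrow> \<sigma> \<in> facets K"
proof -
  assume a: "\<sigma> \<in> K" "\<And>\<tau>. \<tau> \<in> K \<Longrightarrow> ok d m \<tau>" "card \<sigma> = Suc d"
  have "\<tau> = \<sigma>" if "\<tau> \<in> K" "\<sigma> \<subseteq> \<tau>" for \<tau>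
  proof -
    have "finite \<tau>" "card \<tau> \<le> Suc d" using a(2)[OF that(1)] unfolding ok_def by auto
    then show ?thesis using card_seteq[OF _ that(2)] a(3) by simp
  qed
  then show ?thesis unfolding facets_def using a(1) by blast
qed

lemma ok_card_eq: "ok d m \<tau> \<Longrightarrow> \<sigma> \<subseteq> \<tau> \<Longrightarrow> card \<sigma> = Suc d \<Longrightarrow> \<tau> = \<sigma>"
  unfolding ok_def by (metis card_seteq)

lemma bd_intro: assumes "X \<in> K" "\<And>\<tau>. \<tau> \<in> K \<Longrightarrow> ok d m \<tau>" "card X = Suc d" "R \<subseteq> X" "card X = card R + 1"
   "\<And>F. F \<in> K \<Longrightarrow> R \<subseteq> F \<Longrightarrow> card F = card X \<Longrightarrow> F = X"
  shows "R \<in> bd K"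
proof -
  have "X \<in> facets K" by (rule facet_card[OF assms(1,2,3)])
  have S: "{F \<in> facets K. R \<subseteq> F \<and> card F = card R + 1} = {X}"
  proof
    show "{F \<in> facets K. R \<subseteq> F \<and> card F = card R + 1} \<subseteq> {X}"
    proof
      fix F assume "F \<in> {F \<in> facets K. R \<subseteq> F \<and> card F = card R + 1}"
      hence "F \<in> K" "R \<subseteq> F" "card F = card X" using facets_sub assms(5) by auto
      then show "F \<in> {X}" using assms(6) by blast
    qed
    show "{X} \<subseteq> {F \<in> facets K. R \<subseteq> F \<and> card F = card R + 1}"
      using \<open>X \<in> facets K\<close> assms(4,5) by simp
  qed
  have "card {F \<in> facets K. R \<subseteq> F \<and> card F = card R + 1} = 1" unfolding S by simp
  then have "R \<in> {R. card {F \<in> facets K. R \<subseteq> F \<and> card F = card R + 1} = 1}" by simp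
  then show ?thesis unfolding bd_def generated_def by blast
qed

fun Pset :: "nat \<Rightarrow> nat \<Rightarrow> int set \<Rightarrow> bool" where
  "Pset 0 N G = False"
| "Pset (Suc 0) N G = (\<exists>a s. (s = 1 \<or> s = -1) \<and> 1 \<le> a \<and> a + 1 \<le> N \<and> G = {s * int a, s * int (a + 1)})"
| "Pset (Suc (Suc j)) N G = (\<exists>H a s. (s = 1 \<or> s = -1) \<and> 2 \<le> a \<and> a + 2 \<le> N \<and> Pset (Suc j) (a - 1) H
      \<and> G = H \<union> {s * int a, s * int (a + 2)})"

lemma P_basic: "Pset j N G \<Longrightarrow> finite G \<and> card G = 2 * j \<and> (\<forall>v\<in>G. 1 \<le> \<bar>v\<bar> \<and> \<bar>v\<bar> \<le> int N) \<and> 3 * j \<le> N + 1"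
proof (induction j N G rule: Pset.induct)
  case (1 N G) then show ?case by simp
next
  case (2 N G) then show ?case by (auto simp: abs_mult)
next
  case (3 j N G)
  then obtain H a s where h: "s = 1 \<or> s = -1" "2 \<le> a" "a + 2 \<le> N" "Pset (Suc j) (a - 1) H"
    "G = H \<union> {s * int a, s * int (a + 2)}" by auto
  have ih: "finite H \<and> card H = 2 * Suc j \<and> (\<forall>v\<in>H. 1 \<le> \<bar>v\<bar> \<and> \<bar>v\<bar> \<le> int (a - 1)) \<and> 3 * Suc j \<le> a - 1 + 1"
    using 3 h by blast
  have n1: "s * int a \<notin> H" "s * int (a + 2) \<notin> H" using ih h(1,2) by (auto simp: abs_mult)
  have "s * int a \<noteq> s * int (a + 2)" using h(1) by auto
  then have "card G = card H + 2" using h(5) n1 ih by (simp add: card_insert_if)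
  then show ?case using ih h by (auto simp: abs_mult)
qed

lemma P_neg: "Pset j N G \<Longrightarrow> Pset j N (uminus ` G)"
proof (induction j N G rule: Pset.induct)
  case (1 N G) then show ?case by simp
next
  case (2 N G)
  then obtain a s where h: "(s = 1 \<or> s = -1)" "1 \<le> a" "a + 1 \<le> N" "G = {s * int a, s * int (a + 1)}" by auto
  then have "uminus ` G = {(-s) * int a, (-s) * int (a + 1)}" by auto
  then show ?case using h by (metis Pset.simps(2) minus_minus)
next
  case (3 j N G)
  then obtain H a s where h: "s = 1 \<or> s = -1" "2 \<le> a" "a + 2 \<le> N" "Pset (Suc j) (a - 1) H"
    "G = H \<union> {s * int a, s * int (a + 2)}" by auto
  have "Pset (Suc j) (a - 1) (uminus ` H)" using 3 h by blast
  moreover have "uminus ` G = uminus ` H \<union> {(-s) * int a, (-s) * int (a + 2)}" using h by auto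
  ultimately show ?case using h by (metis Pset.simps(3) minus_minus)
qed

lemma P_no: "Pset (Suc (Suc j)) N G \<Longrightarrow> v \<in> G \<Longrightarrow> \<bar>v\<bar> = int N \<Longrightarrow> w \<in> G \<Longrightarrow> \<bar>w\<bar> = int N - 1 \<Longrightarrow> False"
proof -
  assume P: "Pset (Suc (Suc j)) N G" and v: "v \<in> G" "\<bar>v\<bar> = int N" and w: "w \<in> G" "\<bar>w\<bar> = int N - 1"
  then obtain H a s where h: "s = 1 \<or> s = -1" "2 \<le> a" "a + 2 \<le> N" "Pset (Suc j) (a - 1) H"
    "G = H \<union> {s * int a, s * int (a + 2)}" by auto
  have hb: "\<forall>v\<in>H. \<bar>v\<bar> \<le> int (a - 1)" using P_basic[OF h(4)] by blast
  have "v \<notin> H" "v \<noteq> s * int a" using hb v h by (auto simp: abs_mult)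
  hence "v = s * int (a + 2)" using v h by auto
  hence "N = a + 2" using v h by (auto simp: abs_mult)
  then show False using w h hb by (auto simp: abs_mult)
qed

lemma P_split: "Pset (Suc (Suc j)) (Suc N) G \<Longrightarrow> Pset (Suc (Suc j)) N G \<or>
   (\<exists>H s. (s = 1 \<or> s = -1) \<and> 3 \<le> N \<and> Pset (Suc j) (N - 2) H \<and> G = H \<union> {s * (int N - 1), s * (int N + 1)})"
proof -
  assume "Pset (Suc (Suc j)) (Suc N) G"
  then obtain H a s where h: "s = 1 \<or> s = -1" "2 \<le> a" "a + 2 \<le> Suc N" "Pset (Suc j) (a - 1) H"
    "G = H \<union> {s * int a, s * int (a + 2)}" by auto
  show ?thesis
  proof (cases "a + 2 \<le> N")
    case True then show ?thesis using h by auto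
  next
    case False
    then have "a = N - 1" "3 \<le> N" using h by auto
    then have "a - 1 = N - 2" "int a = int N - 1" "int (a + 2) = int N + 1" by auto
    then show ?thesis using h \<open>3 \<le> N\<close> by metis
  qed
qed

lemma conv: "1 \<le> j \<Longrightarrow> 1 \<le> \<bar>p 1\<bar> \<Longrightarrow> (\<forall>i\<in>{1..<2*j}. \<bar>p i\<bar> < \<bar>p (Suc i)\<bar>) \<Longrightarrow> \<bar>p (2*j)\<bar> \<le> int N \<Longrightarrow>
      (\<forall>i\<in>{1..j}. sgn (p (2*i - 1)) = sgn (p (2*i))) \<Longrightarrow>
      \<bar>p 2\<bar> - \<bar>p 1\<bar> = 1 \<Longrightarrow>
      (\<forall>i\<in>{2..j}. \<bar>p (2*i)\<bar> - \<bar>p (2*i - 1)\<bar> = 2) \<Longrightarrow> Pset j N (p ` {1..2*j})"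
proof (induction j arbitrary: N rule: nat_induct_at_least)
  case base
  have "{1..2::nat} = {1, 2}" by auto
  then have e: "p ` {1..2*1} = {p 1, p 2}" by simp
  define a where "a = nat \<bar>p 1\<bar>"
  define s where "s = sgn (p 1)"
  have s: "s = 1 \<or> s = -1" using base unfolding s_def by (auto simp: sgn_if)
  have p1: "p 1 = s * int a" unfolding s_def a_def by (simp add: sgn_mult_abs)
  have "sgn (p 1) = sgn (p 2)" using base(4) by force
  then have p2: "p 2 = s * int (a + 1)" unfolding s_def a_def using base
    by (metis add.commute diff_add_cancel int_nat_eq nat_int of_nat_1 of_nat_add sgn_mult_abs abs_ge_zero)
  have aN: "a + 1 \<le> N" using base p2 s unfolding a_def by (auto simp: abs_mult)
  have "1 \<le> \<bar>p 1\<bar>" using base by blast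
  then have a1: "1 \<le> a" unfolding a_def by linarith
  have "Pset (Suc 0) N {s * int a, s * int (a + 1)}" unfolding Pset.simps(2) using s a1 aN by blast
  then show ?case using e p1 p2 by simp
next
  case (Suc j)
  have j1: "1 \<le> j" by fact
  define a where "a = nat \<bar>p (2*j+1)\<bar>"
  define s where "s = sgn (p (2*j+1))"
  have lt: "\<bar>p (2*j)\<bar> < \<bar>p (2*j+1)\<bar>" "\<bar>p (2*j + 1)\<bar> < \<bar>p (2*j+2)\<bar>" using Suc.prems(2) j1 by auto
  have IH: "Pset j (a - 1) (p ` {1..2*j})"
    apply (rule Suc.IH)
    using Suc.prems lt unfolding a_def by auto
  have "3 * j \<le> a - 1 + 1" using P_basic[OF IH] by blast
  hence a2: "2 \<le> a" using j1 by linarith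
  have s: "s = 1 \<or> s = -1" using a2 unfolding s_def a_def by (auto simp: sgn_if)
  have p1: "p (2*j+1) = s * int a" unfolding s_def a_def by (simp add: sgn_mult_abs)
  have "Suc j \<in> {1..Suc j}" by simp
  then have "sgn (p (2*Suc j - 1)) = sgn (p (2*Suc j))" using Suc.prems(4) by blast
  hence sg: "sgn (p (2*j+1)) = sgn (p (2*j+2))" by simp
  have "Suc j \<in> {2..Suc j}" using j1 by simp
  then have "\<bar>p (2*Suc j)\<bar> - \<bar>p (2*Suc j - 1)\<bar> = 2" using Suc.prems(6) by blast
  hence "\<bar>p (2*j+2)\<bar> = int a + 2" unfolding a_def by simp
  hence p2: "p (2*j+2) = s * int (a + 2)" unfolding s_def using sg
    by (metis of_nat_add of_nat_numeral sgn_mult_abs)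
  have aN: "a + 2 \<le> N" using Suc.prems(3) p2 s by (auto simp: abs_mult)
  have "{1..2 * Suc j} = {1..2*j} \<union> {2*j+1, 2*j+2}" by auto
  hence e: "p ` {1..2 * Suc j} = p ` {1..2*j} \<union> {s * int a, s * int (a + 2)}" using p1 p2 by auto
  obtain j0 where j0: "j = Suc j0" using j1 by (cases j) auto
  have "Pset (Suc (Suc j0)) N (p ` {1..2*j} \<union> {s * int a, s * int (a + 2)})"
    unfolding Pset.simps(3)
    by (intro exI[of _ "p ` {1..2*j}"] exI[of _ a] exI[of _ s] conjI, use s a2 aN IH j0 in auto)
  then show ?case using e j0 by simp
qed

lemma okD1: "\<sigma> \<in> Delta d n \<Longrightarrow> ok d n \<sigma>"
  using bD[of d n] by blast

lemma okD2: "\<sigma> \<in> Bc d i n \<Longrightarrow> ok d n \<sigma>"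
  using bB[of d i n] by blast

lemmas okD = okD1 okD2

lemma okN: "\<sigma> \<in> negc (Bc d i n) \<Longrightarrow> ok d n \<sigma>"
  using okD(2) negc_mem ok_neg by metis

lemma join_cases: "\<tau> \<in> join K (simplex {v}) \<Longrightarrow> \<tau> \<in> K \<or> (\<exists>\<rho>\<in>K. \<tau> = insert v \<rho>)"
  by (auto simp: join_simplex)

lemma join_ins: "\<rho> \<in> K \<Longrightarrow> insert v \<rho> \<in> join K (simplex {v})"
  by (auto simp: join_simplex)

lemma notin_Vn: "\<sigma> \<subseteq> Vn m \<Longrightarrow> int m < \<bar>v\<bar> \<Longrightarrow> v \<notin> \<sigma>"
  unfolding Vn_def by auto

lemma Bfac_even: assumes "\<tau> \<in> Bc (2*j+2) i M" "i \<le> int j + 1" "card \<tau> = 2*j+3"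
  shows "\<exists>w\<in>\<tau>. \<bar>w\<bar> = int M"
proof (cases "M < 2*j+3 \<or> i < 0")
  case True
  have "Bc (2*j+2) i M = {}" using True by (intro Bc_small) auto
  then show ?thesis using assms(1) by simp
next
  case False
  have e: "Bc (2*j+2) i M = join (Bc (2*j+1) i (M - 1)) (simplex {int M})
        \<union> join (negc (Bc (2*j+1) (i - 1) (M - 1))) (simplex {- int M})"
    using Bc_gen[of "2*j+2" i M] False assms(2) by simp
  from assms(1)[unfolded e] show ?thesis
  proof (elim UnE)
    assume "\<tau> \<in> join (Bc (2*j+1) i (M - 1)) (simplex {int M})"
    from join_cases[OF this] show ?thesis
    proof
      assume "\<tau> \<in> Bc (2*j+1) i (M - 1)" then show ?thesis using okD(2) assms(3) unfolding ok_def by fastforce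
    qed auto
  next
    assume "\<tau> \<in> join (negc (Bc (2*j+1) (i - 1) (M - 1))) (simplex {- int M})"
    from join_cases[OF this] show ?thesis
    proof
      assume "\<tau> \<in> negc (Bc (2*j+1) (i - 1) (M - 1))" then show ?thesis using okN assms(3) unfolding ok_def by fastforce
    qed auto
  qed
qed

lemma Bfac: assumes "\<sigma> \<in> Bc (2*j+3) i M" "0 \<le> i" "i \<le> int j + 1" "card \<sigma> = 2*j+4"
  shows "(\<exists>v\<in>\<sigma>. \<bar>v\<bar> = int M) \<and> (\<exists>w\<in>\<sigma>. \<bar>w\<bar> = int M - 1)"
proof (cases "M < 2*j+4")
  case True
  have "Bc (2*j+3) i M = {}" using True by (intro Bc_small) auto
  then show ?thesis using assms(1) by simp
next
  case False
  have e: "Bc (2*j+3) i M = join (Bc (2*j+2) i (M - 1)) (simplex {int M})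
        \<union> join (negc (Bc (2*j+2) (i - 1) (M - 1))) (simplex {- int M})"
    using Bc_gen[of "2*j+3" i M] False assms(2,3) by simp
  have MM: "int (M - 1) = int M - 1" using False by simp
  from assms(1)[unfolded e] show ?thesis
  proof (elim UnE)
    assume "\<sigma> \<in> join (Bc (2*j+2) i (M - 1)) (simplex {int M})"
    from join_cases[OF this] show ?thesis
    proof
      assume "\<sigma> \<in> Bc (2*j+2) i (M - 1)" then show ?thesis using okD(2) assms(4) unfolding ok_def by fastforce
    next
      assume "\<exists>\<rho>\<in>Bc (2*j+2) i (M - 1). \<sigma> = insert (int M) \<rho>"
      then obtain \<rho> where r: "\<rho> \<in> Bc (2*j+2) i (M - 1)" "\<sigma> = insert (int M) \<rho>" by blast
      have ok: "ok (2*j+2) (M - 1) \<rho>" using okD(2) r(1) by blast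
      have "int M \<notin> \<rho>" using ok notin_Vn[of \<rho> "M - 1" "int M"] False unfolding ok_def by simp
      hence "card \<rho> = 2*j+3" using r assms(4) ok unfolding ok_def by simp
      then obtain w where "w \<in> \<rho>" "\<bar>w\<bar> = int (M - 1)" using Bfac_even[OF r(1)] assms(3) by blast
      then show ?thesis using r MM by auto
    qed
  next
    assume "\<sigma> \<in> join (negc (Bc (2*j+2) (i - 1) (M - 1))) (simplex {- int M})"
    from join_cases[OF this] show ?thesis
    proof
      assume "\<sigma> \<in> negc (Bc (2*j+2) (i - 1) (M - 1))" then show ?thesis using okN assms(4) unfolding ok_def by fastforce
    next
      assume "\<exists>\<rho>\<in>negc (Bc (2*j+2) (i - 1) (M - 1)). \<sigma> = insert (- int M) \<rho>"
      then obtain \<rho> where r: "\<rho> \<in> negc (Bc (2*j+2) (i - 1) (M - 1))" "\<sigma> = insert (- int M) \<rho>" by blast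
      have r': "uminus ` \<rho> \<in> Bc (2*j+2) (i - 1) (M - 1)" using r(1) negc_mem by blast
      have ok: "ok (2*j+2) (M - 1) \<rho>" using okN r(1) by blast
      have "- int M \<notin> \<rho>" using ok notin_Vn[of \<rho> "M - 1" "- int M"] False unfolding ok_def by simp
      hence "card \<rho> = 2*j+3" using r assms(4) ok unfolding ok_def by simp
      then obtain w where "w \<in> uminus ` \<rho>" "\<bar>w\<bar> = int (M - 1)" using Bfac_even[OF r'] assms(3) by fastforce
      then show ?thesis using r MM by auto
    qed
  qed
qed

lemma Bnot: "Pset (Suc j) M G \<Longrightarrow> G \<notin> Bc (2*j+1) (int j) M"
proof (cases j)
  case 0
  assume P: "Pset (Suc j) M G"
  then obtain a s where h: "s = 1 \<or> s = -1" "1 \<le> a" "a + 1 \<le> M" "G = {s * int a, s * int (a + 1)}"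
    using 0 by auto
  have "Bc 1 0 M = simplex {-1, int M}" using h by (subst Bc.simps) auto
  moreover have "G \<notin> simplex {-1, int M}" using h unfolding simplex_def by auto
  ultimately show ?thesis using 0 by simp
next
  case (Suc j0)
  assume P: "Pset (Suc j) M G"
  show ?thesis
  proof
    assume a: "G \<in> Bc (2*j+1) (int j) M"
    have eq: "2*j+1 = 2*j0+3" "int j = int j0 + 1" using Suc by auto
    from a have "G \<in> Bc (2*j0+3) (int j0 + 1) M" unfolding eq .
    moreover have "card G = 2*j0+4" using P_basic[OF P] Suc by simp
    ultimately obtain v w where "v \<in> G" "\<bar>v\<bar> = int M" "w \<in> G" "\<bar>w\<bar> = int M - 1"
      using Bfac[of G j0 "int j0 + 1" M] by auto
    then show False using P_no P Suc by blast
  qed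
qed

lemma BcE: "0 \<le> i \<Longrightarrow> i \<le> int j + 1 \<Longrightarrow> 2*j+3 \<le> n \<Longrightarrow>
  Bc (2*j+2) i n = join (Bc (2*j+1) i (n - 1)) (simplex {int n}) \<union> join (negc (Bc (2*j+1) (i - 1) (n - 1))) (simplex {- int n})"
  using Bc_gen[of "2*j+2" i n] by simp

lemma BcO: "0 \<le> i \<Longrightarrow> i \<le> int j + 1 \<Longrightarrow> 2*j+4 \<le> n \<Longrightarrow>
  Bc (2*j+3) i n = join (Bc (2*j+2) i (n - 1)) (simplex {int n}) \<union> join (negc (Bc (2*j+2) (i - 1) (n - 1))) (simplex {- int n})"
  using Bc_gen[of "2*j+3" i n] by simp

lemma BcEE: "0 \<le> i \<Longrightarrow> i \<le> int j + 2 \<Longrightarrow> 2*j+5 \<le> n \<Longrightarrow>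
  Bc (2*j+4) i n = join (Bc (2*j+3) i (n - 1)) (simplex {int n}) \<union> join (negc (Bc (2*j+3) (i - 1) (n - 1))) (simplex {- int n})"
proof -
  assume a: "0 \<le> i" "i \<le> int j + 2" "2*j+5 \<le> n"
  have h: "(2*j+4::nat) - 1 = 2*j+3" by simp
  have "Bc (2*j+4) i n = join (Bc (2*j+4 - 1) i (n - 1)) (simplex {int n}) \<union> join (negc (Bc (2*j+4 - 1) (i - 1) (n - 1))) (simplex {- int n})"
    by (rule Bc_gen) (use a in auto)
  then show ?thesis unfolding h .
qed

lemma Delta_rep3: "2*j+4 < n \<Longrightarrow> Delta (2*j+3) n = replace (Delta (2*j+3) (n - 1)) (Bc (2*j+3) (int j + 1) (n - 1)) (n - 1)"
proof -
  assume a: "2*j+4 < n"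
  have h: "int ((2*j+3+1) div 2) - 1 = int j + 1" by simp
  show ?thesis using Delta_rep[of "2*j+3" n] a unfolding h by simp
qed

lemma core:
  assumes P: "Pset (Suc j) (N - 2) H" and D: "H \<in> Delta (2*j+1) (N - 2)" and N3: "3 \<le> N"
  shows "insert (int N) (insert (int N - 1) H) \<in> Bc (2*j+3) (int j + 1) N"
    and "\<And>F. F \<in> Bc (2*j+3) (int j + 1) N \<Longrightarrow> insert (int N - 1) H \<subseteq> F \<Longrightarrow> card F = 2*j+4
          \<Longrightarrow> F = insert (int N) (insert (int N - 1) H)"
    and "card (insert (int N) (insert (int N - 1) H)) = 2*j+4"
    and "card (insert (int N - 1) H) = 2*j+3"
proof -
  have pb: "finite H" "card H = 2*j+2" "\<forall>v\<in>H. 1 \<le> \<bar>v\<bar> \<and> \<bar>v\<bar> \<le> int (N - 2)" "3 * Suc j \<le> N - 2 + 1"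
    using P_basic[OF P] by auto
  have NN: "int (N - 2) = int N - 2" "int (N - 1) = int N - 1" using N3 by auto
  have n1: "int N - 1 \<notin> H" "int N \<notin> H" "- (int N - 1) \<notin> H" using pb(3) NN by fastforce+
  show cR: "card (insert (int N - 1) H) = 2*j+3" using pb n1 by simp
  show cX: "card (insert (int N) (insert (int N - 1) H)) = 2*j+4" using pb n1 by simp
  have hB: "H \<notin> Bc (2*j+1) (int j) (N - 2)" using Bnot[OF P] .
  have cH: "card H = Suc (2*j+1)" using pb(2) by simp
  have hF: "H \<in> facets (Delta (2*j+1) (N - 2))" by (rule facet_card[OF D okD(1) cH])
  have e0: "Bc (2*j+1) (int j + 1) (N - 2) = diffc (Delta (2*j+1) (N - 2)) (Bc (2*j+1) (int j) (N - 2))"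
    using Bc_odd[of "2*j+1" "int j + 1" "N - 2"] pb(4) by simp
  have h0: "H \<in> Bc (2*j+1) (int j + 1) (N - 2)" unfolding e0 diffc_def generated_def
    using hF hB facets_sub by blast
  have e1: "Bc (2*j+2) (int j + 1) (N - 1) = join (Bc (2*j+1) (int j + 1) (N - 2)) (simplex {int N - 1})
        \<union> join (negc (Bc (2*j+1) (int j) (N - 2))) (simplex {- (int N - 1)})"
  proof -
    have "N - 1 - 1 = N - 2" by simp
    then show ?thesis using BcE[of "int j + 1" j "N - 1"] pb(4) NN by simp
  qed
  have e2: "Bc (2*j+3) (int j + 1) N = join (Bc (2*j+2) (int j + 1) (N - 1)) (simplex {int N})
        \<union> join (negc (Bc (2*j+2) (int j) (N - 1))) (simplex {- int N})"
    using BcO[of "int j + 1" j N] pb(4) by simp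
  have e3: "Bc (2*j+2) (int j) (N - 1) = join (Bc (2*j+1) (int j) (N - 2)) (simplex {int N - 1})
        \<union> join (negc (Bc (2*j+1) (int j - 1) (N - 2))) (simplex {- (int N - 1)})"
  proof -
    have "N - 1 - 1 = N - 2" by simp
    then show ?thesis using BcE[of "int j" j "N - 1"] pb(4) NN by simp
  qed
  have R1: "insert (int N - 1) H \<in> Bc (2*j+2) (int j + 1) (N - 1)" unfolding e1 using join_ins[OF h0] by blast
  show "insert (int N) (insert (int N - 1) H) \<in> Bc (2*j+3) (int j + 1) N" unfolding e2 using join_ins[OF R1] by blast
  fix F assume F: "F \<in> Bc (2*j+3) (int j + 1) N" "insert (int N - 1) H \<subseteq> F" "card F = 2*j+4"
  from F(1)[unfolded e2] show "F = insert (int N) (insert (int N - 1) H)"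
  proof (elim UnE)
    assume "F \<in> join (Bc (2*j+2) (int j + 1) (N - 1)) (simplex {int N})"
    from join_cases[OF this] show ?thesis
    proof
      assume "F \<in> Bc (2*j+2) (int j + 1) (N - 1)" then show ?thesis using okD(2) F(3) unfolding ok_def by fastforce
    next
      assume "\<exists>\<rho>\<in>Bc (2*j+2) (int j + 1) (N - 1). F = insert (int N) \<rho>"
      then obtain \<rho> where r: "\<rho> \<in> Bc (2*j+2) (int j + 1) (N - 1)" "F = insert (int N) \<rho>" by blast
      have "insert (int N - 1) H \<subseteq> \<rho>" using F(2) r(2) n1 by auto
      hence "\<rho> = insert (int N - 1) H" using ok_card_eq[OF okD(2)[OF r(1)]] cR by simp
      then show ?thesis using r by simp
    qed
  next
    assume "F \<in> join (negc (Bc (2*j+2) (int j) (N - 1))) (simplex {- int N})"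
    from join_cases[OF this] show ?thesis
    proof
      assume "F \<in> negc (Bc (2*j+2) (int j) (N - 1))" then show ?thesis using okN F(3) unfolding ok_def by fastforce
    next
      assume "\<exists>\<rho>\<in>negc (Bc (2*j+2) (int j) (N - 1)). F = insert (- int N) \<rho>"
      then obtain \<rho> where r: "\<rho> \<in> negc (Bc (2*j+2) (int j) (N - 1))" "F = insert (- int N) \<rho>" by blast
      have "- int N \<notin> H"
      proof
        assume "- int N \<in> H"
        then have "\<bar>- int N\<bar> \<le> int (N - 2)" using pb(3) by blast
        then show False using NN by simp
      qed
      moreover have "- int N \<noteq> int N - 1" using N3 by simp
      ultimately have "- int N \<notin> insert (int N - 1) H" by simp
      hence "insert (int N - 1) H \<subseteq> \<rho>" using F(2) r(2) by auto
      hence rr: "\<rho> = insert (int N - 1) H" using ok_card_eq[OF okN[OF r(1)]] cR by simp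
      have mR: "insert (- (int N - 1)) (uminus ` H) \<in> Bc (2*j+2) (int j) (N - 1)"
        using r(1) rr negc_mem by auto
      have bigv: "int (N - 2) < \<bar>- (int N - 1)\<bar>" using NN N3 by simp
      from mR[unfolded e3] have False
      proof (elim UnE)
        assume a: "insert (- (int N - 1)) (uminus ` H) \<in> join (Bc (2*j+1) (int j) (N - 2)) (simplex {int N - 1})"
        have "\<exists>\<rho>'\<in>Bc (2*j+1) (int j) (N - 2). - (int N - 1) \<in> \<rho>'"
        proof (rule disjE[OF join_cases[OF a]])
          assume "insert (- (int N - 1)) (uminus ` H) \<in> Bc (2*j+1) (int j) (N - 2)"
          then show ?thesis by blast
        next
          assume "\<exists>\<rho>\<in>Bc (2*j+1) (int j) (N - 2). insert (- (int N - 1)) (uminus ` H) = insert (int N - 1) \<rho>"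
          then obtain \<rho> where r1: "\<rho> \<in> Bc (2*j+1) (int j) (N - 2)"
            "insert (- (int N - 1)) (uminus ` H) = insert (int N - 1) \<rho>" by blast
          have "- (int N - 1) \<in> insert (int N - 1) \<rho>" using r1(2) by (metis insertI1)
          moreover have "- (int N - 1) \<noteq> int N - 1" using N3 by simp
          ultimately show ?thesis using r1(1) by blast
        qed
        then obtain \<rho>' where "\<rho>' \<in> Bc (2*j+1) (int j) (N - 2)" "- (int N - 1) \<in> \<rho>'" by blast
        then show False using okD(2) notin_Vn bigv unfolding ok_def by blast
      next
        assume a: "insert (- (int N - 1)) (uminus ` H) \<in> join (negc (Bc (2*j+1) (int j - 1) (N - 2))) (simplex {- (int N - 1)})"
        from join_cases[OF a] show False
        proof
          assume "insert (- (int N - 1)) (uminus ` H) \<in> negc (Bc (2*j+1) (int j - 1) (N - 2))"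
          then show False using okN notin_Vn bigv unfolding ok_def by blast
        next
          assume "\<exists>\<rho>'\<in>negc (Bc (2*j+1) (int j - 1) (N - 2)). insert (- (int N - 1)) (uminus ` H) = insert (- (int N - 1)) \<rho>'"
          then obtain \<rho>' where r': "\<rho>' \<in> negc (Bc (2*j+1) (int j - 1) (N - 2))"
            "insert (- (int N - 1)) (uminus ` H) = insert (- (int N - 1)) \<rho>'" by blast
          have "uminus ` H \<subseteq> \<rho>'" using r'(2) n1 by (metis (no_types, lifting) image_iff insert_subset minus_minus subset_insertI subset_insert_iff)
          hence "uminus ` uminus ` H \<subseteq> uminus ` \<rho>'" by (rule image_mono)
          hence "H \<subseteq> uminus ` \<rho>'" by (simp add: image_image)
          moreover have m: "uminus ` \<rho>' \<in> Bc (2*j+1) (int j - 1) (N - 2)" using r'(1) negc_mem by blast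
          ultimately have hh: "uminus ` \<rho>' = H" using ok_card_eq[OF okD(2)[OF m]] pb(2) by simp
          show False
          proof (cases j)
            case 0 then show False using m Bc_small by auto
          next
            case (Suc j0)
            have eqs: "2*j+1 = 2*j0+3" "int j - 1 = int j0" using Suc by auto
            from m have "H \<in> Bc (2*j0+3) (int j0) (N - 2)" unfolding eqs hh .
            moreover have "card H = 2*j0+4" using pb Suc by simp
            ultimately obtain v w where "v \<in> H" "\<bar>v\<bar> = int (N - 2)" "w \<in> H" "\<bar>w\<bar> = int (N - 2) - 1"
              using Bfac[of H j0 "int j0" "N - 2"] by auto
            then show False using P_no P Suc by blast
          qed
        qed
      qed
      then show ?thesis ..
    qed
  qed
qed

lemma main: "Pset (Suc j) N G \<Longrightarrow> G \<in> Delta (2*j+1) N"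
proof (induction j arbitrary: N G)
  case 0
  then obtain a s where h: "s = 1 \<or> s = -1" "1 \<le> a" "a + 1 \<le> N" "G = {s * int a, s * int (a + 1)}" by auto
  have "G \<in> {{int i, int i + 1} | i. 1 \<le> i \<and> i < N} \<union> {{- int i, - int i - 1} | i. 1 \<le> i \<and> i < N}"
  proof (cases "s = 1")
    case True
    then have "G = {int a, int a + 1}" using h by (simp add: algebra_simps)
    then have "\<exists>i. G = {int i, int i + 1} \<and> 1 \<le> i \<and> i < N" using h by (intro exI[of _ a]) auto
    then have "G \<in> {{int i, int i + 1} | i. 1 \<le> i \<and> i < N}" by simp
    then show ?thesis by blast
  next
    case False
    then have sm: "s = -1" using h(1) by simp
    have e: "s * int a = - int a" "s * int (a + 1) = - int a - 1" using sm by simp_all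
    have "G = {- int a, - int a - 1}" using h(4) unfolding e .
    then have "\<exists>i. G = {- int i, - int i - 1} \<and> 1 \<le> i \<and> i < N" using h by (intro exI[of _ a]) auto
    then have "G \<in> {{- int i, - int i - 1} | i. 1 \<le> i \<and> i < N}" by simp
    then show ?thesis by blast
  qed
  then have "G \<in> cycle N" unfolding cycle_def generated_mem by blast
  then show ?case using Delta_one h by simp
next
  case (Suc j)
  have outer: "\<And>N G. Pset (Suc j) N G \<Longrightarrow> G \<in> Delta (2*j+1) N" by fact
  have all: "\<forall>G. Pset (Suc (Suc j)) N G \<longrightarrow> G \<in> Delta (2*j+3) N"
  proof (induction N)
    case 0 show ?case
    proof (intro allI impI)
      fix G assume "Pset (Suc (Suc j)) 0 G"
      from P_basic[OF this] show "G \<in> Delta (2*j+3) 0" by simp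
    qed
  next
    case (Suc N)
    show ?case
    proof (intro allI impI)
      fix G assume P: "Pset (Suc (Suc j)) (Suc N) G"
      have pb: "card G = 2*j+4" "3 * Suc (Suc j) \<le> Suc N + 1" using P_basic[OF P] by auto
      define B where "B = Bc (2*j+3) (int j + 1) N"
      have eD: "Delta (2*j+3) (Suc N) = replace (Delta (2*j+3) N) B N"
        using Delta_rep3[of j "Suc N"] pb unfolding B_def by simp
      from P_split[OF P] show "G \<in> Delta (2*j+3) (Suc N)"
      proof
        assume P': "Pset (Suc (Suc j)) N G"
        have GD: "G \<in> Delta (2*j+3) N" using Suc.IH P' by blast
        have eqs: "2 * Suc j + 1 = 2*j+3" "int (Suc j) = int j + 1" by simp_all
        have nB: "G \<notin> B" using Bnot[OF P', unfolded eqs] unfolding B_def .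
        have nB': "uminus ` G \<notin> B" using Bnot[OF P_neg[OF P'], unfolded eqs] unfolding B_def .
        have cG: "card G = Suc (2*j+3)" using pb(1) by simp
        have GF: "G \<in> facets (Delta (2*j+3) N)" by (rule facet_card[OF GD okD(1) cG])
        have G1: "G \<in> diffc (Delta (2*j+3) N) B" unfolding diffc_def generated_def
          using GF nB facets_sub by blast
        have okd: "ok (2*j+3) N \<tau>" if a: "\<tau> \<in> diffc (Delta (2*j+3) N) B" for \<tau>
        proof -
          obtain \<rho> where "\<rho> \<in> Delta (2*j+3) N" "\<tau> \<subseteq> \<rho>" using diffc_sub[OF a] by blast
          then show ?thesis using okD(1) ok_sub by blast
        qed
        have G2: "G \<in> facets (diffc (Delta (2*j+3) N) B)" by (rule facet_card[OF G1 okd cG])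
        have "G \<notin> facets (negc B)" using nB' negc_mem facets_sub by blast
        hence "G \<in> diffc (diffc (Delta (2*j+3) N) B) (negc B)" unfolding diffc_def[of _ "negc B"] generated_def
          using G2 by blast
        then show ?thesis unfolding eD replace_def by blast
      next
        assume "\<exists>H s. (s = 1 \<or> s = -1) \<and> 3 \<le> N \<and> Pset (Suc j) (N - 2) H \<and> G = H \<union> {s * (int N - 1), s * (int N + 1)}"
        then obtain H s where h: "s = 1 \<or> s = -1" "3 \<le> N" "Pset (Suc j) (N - 2) H"
          "G = H \<union> {s * (int N - 1), s * (int N + 1)}" by blast
        have okB: "\<And>\<tau>. \<tau> \<in> B \<Longrightarrow> ok (2*j+3) N \<tau>" unfolding B_def using okD(2) by blast
        from h(1) show ?thesis
        proof
          assume s1: "s = 1"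
          note c = core[OF h(3) outer[OF h(3)] h(2), folded B_def]
          have "insert (int N - 1) H \<in> bd B"
          proof (rule bd_intro[OF c(1) okB])
            show "card (insert (int N) (insert (int N - 1) H)) = Suc (2 * j + 3)" using c(3) by simp
            show "insert (int N - 1) H \<subseteq> insert (int N) (insert (int N - 1) H)" by blast
            show "card (insert (int N) (insert (int N - 1) H)) = card (insert (int N - 1) H) + 1" using c(3,4) by simp
            fix F assume "F \<in> B" "insert (int N - 1) H \<subseteq> F" "card F = card (insert (int N) (insert (int N - 1) H))"
            then show "F = insert (int N) (insert (int N - 1) H)" using c(2) c(3) by simp
          qed
          hence "insert (int N + 1) (insert (int N - 1) H) \<in> join (bd B) (simplex {int N + 1})"
            by (rule join_ins)
          moreover have "G = insert (int N + 1) (insert (int N - 1) H)" using h(4) s1 by auto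
          ultimately show ?thesis unfolding eD replace_def by blast
        next
          assume s1: "s = -1"
          have P2: "Pset (Suc j) (N - 2) (uminus ` H)" using P_neg[OF h(3)] .
          note c = core[OF P2 outer[OF P2] h(2), folded B_def]
          define X where "X = insert (int N) (insert (int N - 1) (uminus ` H))"
          have okB': "ok (2*j+3) N \<tau>" if "\<tau> \<in> negc B" for \<tau>
            using okB[of "uminus ` \<tau>"] that negc_mem ok_neg by blast
          have XB: "uminus ` X \<in> negc B" using c(1) negc_mem unfolding X_def by (simp add: image_image)
          have cX: "card (uminus ` X) = 2*j+4" unfolding card_neg X_def by (rule c(3))
          have cRR: "card (insert (- (int N - 1)) H) = 2*j+3"
          proof -
            have "insert (- (int N - 1)) H = uminus ` (insert (int N - 1) (uminus ` H))" by (simp add: image_image)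
            then show ?thesis unfolding card_neg using c(4) by (simp only: card_neg)
          qed
          have "insert (- (int N - 1)) H \<in> bd (negc B)"
          proof (rule bd_intro[OF XB okB'])
            show "card (uminus ` X) = Suc (2*j+3)" using cX by simp
            show "insert (- (int N - 1)) H \<subseteq> uminus ` X" unfolding X_def by (auto simp: image_image)
            show "card (uminus ` X) = card (insert (- (int N - 1)) H) + 1" using cX cRR by simp
            fix F assume F: "F \<in> negc B" "insert (- (int N - 1)) H \<subseteq> F" "card F = card (uminus ` X)"
            have "uminus ` F \<in> B" using F(1) negc_mem by blast
            moreover have "insert (int N - 1) (uminus ` H) \<subseteq> uminus ` F"
            proof -
              have "uminus ` insert (- (int N - 1)) H \<subseteq> uminus ` F" by (rule image_mono[OF F(2)])
              moreover have "uminus ` insert (- (int N - 1)) H = insert (int N - 1) (uminus ` H)" by simp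
              ultimately show ?thesis by simp
            qed
            moreover have "card (uminus ` F) = 2*j+4" using F(3) cX by simp
            ultimately have "uminus ` F = X" using c(2) unfolding X_def by blast
            moreover have "F = uminus ` (uminus ` F)" by (simp add: image_image)
            ultimately show "F = uminus ` X" by simp
          qed
          hence "insert (- (int N + 1)) (insert (- (int N - 1)) H) \<in> join (bd (negc B)) (simplex {- (int N + 1)})"
            by (rule join_ins)
          moreover have "G = insert (- (int N + 1)) (insert (- (int N - 1)) H)" using h(4) s1 by auto
          ultimately show ?thesis unfolding eD replace_def by blast
        qed
      qed
    qed
  qed
  have eq: "2 * Suc j + 1 = 2*j+3" by simp
  from all Suc.prems show ?case unfolding eq by blast
qed

theorem mainTheorem7:
  fixes k n :: nat and G :: "int set"
  assumes "k \<ge> 2"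
    and "G \<subseteq> Vn (n - 3)"
    and "card G = 2*k - 2"
    and "propP (n - 3) G"
  shows "G \<union> {int n - 2, int n - 1, int n} \<in> facets (Bc (2*k) (int k - 1) n)"
proof -
  obtain j0 p where pp: "G = p ` {1..2*j0}" "1 \<le> \<bar>p 1\<bar>" "\<forall>i\<in>{1..<2*j0}. \<bar>p i\<bar> < \<bar>p (Suc i)\<bar>"
    "\<bar>p (2*j0)\<bar> \<le> int (n - 3)" "\<forall>i\<in>{1..j0}. sgn (p (2*i - 1)) = sgn (p (2*i))"
    "\<bar>p 2\<bar> - \<bar>p 1\<bar> = 1" "\<forall>i\<in>{2..j0}. \<bar>p (2*i)\<bar> - \<bar>p (2*i - 1)\<bar> = 2"
    using assms(4) unfolding propP_def by blast
  have "j0 \<noteq> 0"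
  proof
    assume "j0 = 0"
    then have "G = {}" using pp(1) by simp
    then show False using assms(1,3) by simp
  qed
  hence P0: "Pset j0 (n - 3) G" using conv[of j0 p "n - 3"] pp by simp
  have "card G = 2 * j0" using P_basic[OF P0] by simp
  hence "j0 = k - 1" using assms(1,3) by simp
  define j where "j = k - 2"
  have kj: "k = j + 2" "j0 = Suc j" using assms(1) \<open>j0 = k - 1\<close> unfolding j_def by auto
  have P: "Pset (Suc j) (n - 3) G" using P0 kj by simp
  have pb: "card G = 2*j+2" "\<forall>v\<in>G. 1 \<le> \<bar>v\<bar> \<and> \<bar>v\<bar> \<le> int (n - 3)" "3 * Suc j \<le> n - 3 + 1" "finite G"
    using P_basic[OF P] by auto
  have n3: "int (n - 3) = int n - 3" "int (n - 2) = int n - 2" "int (n - 1) = int n - 1" using pb(3) by auto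
  have GD: "G \<in> Delta (2*j+1) (n - 3)" using main[OF P] .
  have hB: "G \<notin> Bc (2*j+1) (int j) (n - 3)" using Bnot[OF P] .
  have cG: "card G = Suc (2*j+1)" using pb(1) by simp
  have hF: "G \<in> facets (Delta (2*j+1) (n - 3))" by (rule facet_card[OF GD okD(1) cG])
  have e0: "Bc (2*j+1) (int j + 1) (n - 3) = diffc (Delta (2*j+1) (n - 3)) (Bc (2*j+1) (int j) (n - 3))"
    using Bc_odd[of "2*j+1" "int j + 1" "n - 3"] pb(3) by simp
  have h0: "G \<in> Bc (2*j+1) (int j + 1) (n - 3)" unfolding e0 diffc_def generated_def
    using hF hB facets_sub by blast
  have e1: "Bc (2*j+2) (int j + 1) (n - 2) = join (Bc (2*j+1) (int j + 1) (n - 3)) (simplex {int n - 2})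
        \<union> join (negc (Bc (2*j+1) (int j) (n - 3))) (simplex {- (int n - 2)})"
  proof -
    have "n - 2 - 1 = n - 3" by simp
    then show ?thesis using BcE[of "int j + 1" j "n - 2"] pb(3) n3 by simp
  qed
  have e2: "Bc (2*j+3) (int j + 1) (n - 1) = join (Bc (2*j+2) (int j + 1) (n - 2)) (simplex {int n - 1})
        \<union> join (negc (Bc (2*j+2) (int j) (n - 2))) (simplex {- (int n - 1)})"
  proof -
    have "n - 1 - 1 = n - 2" by simp
    then show ?thesis using BcO[of "int j + 1" j "n - 1"] pb(3) n3 by simp
  qed
  have e3: "Bc (2*j+4) (int j + 1) n = join (Bc (2*j+3) (int j + 1) (n - 1)) (simplex {int n})
        \<union> join (negc (Bc (2*j+3) (int j) (n - 1))) (simplex {- int n})"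
    using BcEE[of "int j + 1" j n] pb(3) by simp
  have m1: "insert (int n - 2) G \<in> Bc (2*j+2) (int j + 1) (n - 2)" unfolding e1 using join_ins[OF h0] by blast
  have m2: "insert (int n - 1) (insert (int n - 2) G) \<in> Bc (2*j+3) (int j + 1) (n - 1)" unfolding e2 using join_ins[OF m1] by blast
  have m3: "insert (int n) (insert (int n - 1) (insert (int n - 2) G)) \<in> Bc (2*j+4) (int j + 1) n" unfolding e3 using join_ins[OF m2] by blast
  have eq: "G \<union> {int n - 2, int n - 1, int n} = insert (int n) (insert (int n - 1) (insert (int n - 2) G))" by auto
  have nin: "int n - 2 \<notin> G" "int n - 1 \<notin> G" "int n \<notin> G" using pb(2) n3 by fastforce+
  have cF: "card (insert (int n) (insert (int n - 1) (insert (int n - 2) G))) = Suc (2*j+4)"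
    using nin pb(1,4) by simp
  have F1: "insert (int n) (insert (int n - 1) (insert (int n - 2) G)) \<in> facets (Bc (2*j+4) (int j + 1) n)"
    by (rule facet_card[OF m3 okD(2) cF])
  have eq2: "2*k = 2*j+4" "int k - 1 = int j + 1" using kj by auto
  show ?thesis unfolding eq eq2 by (rule F1)
qed

end
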